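(* Let $X\subseteq[U]$ be a set of $k$ keys. Let $p>4U^2$ be a prime and $m\le U$ a positive integer, and let $h(x)=((\sigma x+\tau)\bmod p)\bmod m$ where $\sigma,\tau\in[p]$ are chosen independently and uniformly at random. Fix a key $x\notin X$ and buckets $a,b\in[m]$, and let $F=\sum_{y\in X}[h(y)=b]$. Then $$\mathbb{E}(F\mid h(x)=a)=\mathbb{E}(F)=\frac{k}{m}\pm\Theta(1),$$ and for every $\lambda>0$, $$\Pr\big(|F-\mathbb{E}(F)|\ge\lambda\sqrt{\mathbb{E}(F)}\;\big|\;h(x)=a\big)\le O\!\left(\frac{U\log U}{\lambda^2k}\right).$$
   Context: $[N]=\{0,1,\dots,N-1\}$; $[P]$ for a proposition $P$ is the Iverson bracket (1 if $P$ holds, 0 otherwise). "$\frac km\pm\Theta(1)$" means that the difference $\mathbb{E}(F)-\frac km$ is bounded in absolute value by an absolute constant. The $O(\cdot)$ hides an absolute constant. *)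

theory Defs
  imports "HOL-Probability.Probability"
begin

definition hash_fn :: "nat \<Rightarrow> nat \<Rightarrow> nat \<times> nat \<Rightarrow> nat \<Rightarrow> nat" where
  "hash_fn p m st x = ((fst st * x + snd st) mod p) mod m"

definition seed_pmf :: "nat \<Rightarrow> (nat \<times> nat) pmf" where
  "seed_pmf p = pmf_of_set ({..<p} \<times> {..<p})"

definition bucket_load :: "nat \<Rightarrow> nat \<Rightarrow> nat set \<Rightarrow> nat \<Rightarrow> nat \<times> nat \<Rightarrow> real" where
  "bucket_load p m X b st = (\<Sum>y\<in>X. of_bool (hash_fn p m st y = b))"

end

theory Submission
  imports Defs
begin

lemma card_cong_interval:
  fixes C :: "int set" and q lo hi :: int
  assumes q: "q > 0" and sub: "C \<subseteq> {lo..hi}" and le: "lo \<le> hi"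
    and cong: "\<forall>c\<in>C. \<forall>c'\<in>C. q dvd c - c'"
  shows "real (card C) \<le> real_of_int (hi - lo) / real_of_int q + 1"
proof -
  define f where "f c = (c - lo) div q" for c
  have inj: "inj_on f C"
  proof (rule inj_onI)
    fix c c' assume c: "c \<in> C" and c': "c' \<in> C" and e: "f c = f c'"
    have "(c - lo) mod q = (c' - lo) mod q"
      using cong c c' by (simp add: mod_eq_dvd_iff)
    then have "c - lo = c' - lo" using e unfolding f_def by (metis div_mult_mod_eq)
    then show "c = c'" by simp
  qed
  have img: "f ` C \<subseteq> {0..(hi - lo) div q}"
  proof
    fix y assume "y \<in> f ` C"
    then obtain c where c: "c \<in> C" "y = f c" by auto
    then have "lo \<le> c" "c \<le> hi" using sub by auto
    then show "y \<in> {0..(hi - lo) div q}" using q c unfolding f_def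
      by (auto intro: zdiv_mono1 simp: pos_imp_zdiv_nonneg_iff)
  qed
  have "card C = card (f ` C)" using inj by (simp add: card_image)
  also have "\<dots> \<le> card {0..(hi - lo) div q}" using img by (intro card_mono) auto
  also have "\<dots> = nat ((hi - lo) div q + 1)" by simp
  finally have c1: "card C \<le> nat ((hi - lo) div q + 1)" .
  have d0: "0 \<le> (hi - lo) div q" using le q by (simp add: pos_imp_zdiv_nonneg_iff)
  have "real (card C) \<le> real (nat ((hi - lo) div q + 1))" using c1 by linarith
  also have "\<dots> = real_of_int ((hi - lo) div q) + 1" using d0 by simp
  finally have "real (card C) \<le> real_of_int ((hi - lo) div q) + 1" .
  also have "real_of_int ((hi - lo) div q) \<le> real_of_int (hi - lo) / real_of_int q"
    by (rule real_of_int_div4)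
  finally show ?thesis by simp
qed

lemma count2_aux:
  fixes \<beta> \<gamma> :: int and n p :: nat and S :: "int set"
  assumes bne: "\<beta> \<noteq> 0" and gne: "\<gamma> \<noteq> 0" and pp: "prime p"
    and cop: "coprime (gcd \<beta> \<gamma>) (int p)"
    and Sc: "\<forall>s\<in>S. \<forall>s'\<in>S. int p dvd s - s'" and bg: "\<bar>\<beta>\<bar> \<le> \<bar>\<gamma>\<bar>"
    and n0: "n > 0"
  shows "real (card {(j,l). j < n \<and> l < n \<and> \<beta> * int j + \<gamma> * int l \<in> S})
     \<le> real n * real (n - 1) / real p + real n * real_of_int (gcd \<beta> \<gamma>) / real_of_int \<bar>\<gamma>\<bar>
       + 4 * real_of_int \<bar>\<gamma>\<bar> * real n / (real_of_int (gcd \<beta> \<gamma>) * real p) + 1"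
proof -
  define g where "g = gcd \<beta> \<gamma>"
  have g0: "g > 0" using bne unfolding g_def by simp
  have gdb: "g dvd \<beta>" "g dvd \<gamma>" unfolding g_def by auto
  define q where "q = \<bar>\<gamma>\<bar> div g"
  have qg: "\<bar>\<gamma>\<bar> = q * g" unfolding q_def using gdb(2) by simp
  have q0: "q > 0"
  proof (rule ccontr)
    assume "\<not> q > 0" hence "q * g \<le> 0" using g0 by (simp add: mult_nonpos_nonneg)
    thus False using qg gne by simp
  qed
  have qabs: "q = \<bar>\<gamma> div g\<bar>" unfolding q_def using gdb(2) g0
    by (metis abs_div abs_of_pos)
  have cop2: "coprime (\<beta> div g) (\<gamma> div g)" unfolding g_def using bne by (simp add: div_gcd_coprime)
  have p0: "p > 0" using pp by (simp add: prime_gt_0_nat)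
  define N where "N = int n"
  have N1: "N \<ge> 1" using n0 unfolding N_def by simp
  define mn where "mn = min 0 ((N - 1) * \<gamma>)"
  define mx where "mx = max 0 ((N - 1) * \<gamma>)"
  have mxmn: "mx - mn = (N - 1) * \<bar>\<gamma>\<bar>"
  proof (cases "\<gamma> \<ge> 0")
    case True then have "(N-1)*\<gamma> \<ge> 0" using N1 by simp
    then show ?thesis using True by (simp add: mn_def mx_def)
  next
    case False then have "(N-1)*\<gamma> \<le> 0" using N1 by (simp add: mult_nonneg_nonpos)
    then show ?thesis using False by (simp add: mn_def mx_def)
  qed
  define P where "P = {(j,l). j < n \<and> l < n \<and> \<beta> * int j + \<gamma> * int l \<in> S}"
  define S2 where "S2 = {s\<in>S. g dvd s \<and> -2*\<bar>\<gamma>\<bar>*N \<le> s \<and> s \<le> 2*\<bar>\<gamma>\<bar>*N}"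
  define C where "C s = {j. j < n \<and> (\<exists>l<n. \<beta> * int j + \<gamma> * int l = s)}" for s
  define J where "J s = {j. j < n \<and> mn \<le> s - \<beta> * int j \<and> s - \<beta> * int j \<le> mx}" for s
  have finS2: "finite S2" unfolding S2_def by (rule finite_subset[of _ "{-2*\<bar>\<gamma>\<bar>*N..2*\<bar>\<gamma>\<bar>*N}"]) auto
  have finC: "finite (C s)" for s unfolding C_def by auto
  have finJ: "finite (J s)" for s unfolding J_def by auto
  have stepA: "card P \<le> card (Sigma S2 C)"
  proof (rule card_inj_on_le)
    show "inj_on (\<lambda>(j,l). (\<beta> * int j + \<gamma> * int l, j)) P"
      using gne by (auto simp: inj_on_def)
    show "(\<lambda>(j,l). (\<beta> * int j + \<gamma> * int l, j)) ` P \<subseteq> Sigma S2 C"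
    proof clarsimp
      fix j l assume "(j,l) \<in> P"
      then have jl: "j < n" "l < n" "\<beta> * int j + \<gamma> * int l \<in> S" unfolding P_def by auto
      have b1: "\<bar>\<beta> * int j\<bar> \<le> \<bar>\<gamma>\<bar> * N" unfolding N_def using bg jl(1)
        by (simp add: abs_mult mult_mono)
      have b2: "\<bar>\<gamma> * int l\<bar> \<le> \<bar>\<gamma>\<bar> * N" unfolding N_def using jl(2)
        by (simp add: abs_mult mult_left_mono)
      have "g dvd \<beta> * int j + \<gamma> * int l" using gdb by simp
      then show "\<beta> * int j + \<gamma> * int l \<in> S2 \<and> j \<in> C (\<beta> * int j + \<gamma> * int l)"
        using jl b1 b2 unfolding S2_def C_def by auto
    qed
    show "finite (Sigma S2 C)" using finS2 finC by auto
  qed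
  have stepB: "card (Sigma S2 C) = (\<Sum>s\<in>S2. card (C s))"
    using finS2 finC by (simp add: card_SigmaI)
  have stepC: "real (card (C s)) \<le> real (card (J s)) / real_of_int q + 1" for s
  proof (cases "C s = {}")
    case True then show ?thesis using q0 by simp
  next
    case False
    define lo where "lo = Min (C s)"
    define hi where "hi = Max (C s)"
    have lohi: "lo \<in> C s" "hi \<in> C s" unfolding lo_def hi_def using False finC by auto
    have bnd: "lo \<le> j \<and> j \<le> hi" if "j \<in> C s" for j
      unfolding lo_def hi_def using that finC by auto
    have CJ: "C s \<subseteq> J s"
    proof
      fix j assume "j \<in> C s"
      then obtain l where l: "j < n" "l < n" "\<beta> * int j + \<gamma> * int l = s" unfolding C_def by auto
      have "s - \<beta> * int j = \<gamma> * int l" using l by simp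
      moreover have "min 0 ((N - 1) * \<gamma>) \<le> \<gamma> * int l \<and> \<gamma> * int l \<le> max 0 ((N - 1) * \<gamma>)"
      proof -
        have l1: "0 \<le> int l" "int l \<le> N - 1" using l(2) unfolding N_def by auto
        have m1: "min 0 ((N - 1) * \<gamma>) \<le> 0" "min 0 ((N - 1) * \<gamma>) \<le> (N - 1) * \<gamma>"
          "0 \<le> max 0 ((N - 1) * \<gamma>)" "(N - 1) * \<gamma> \<le> max 0 ((N - 1) * \<gamma>)" by auto
        show ?thesis
        proof (cases "\<gamma> \<ge> 0")
          case True
          have "\<gamma> * int l \<le> \<gamma> * (N - 1)" using True l1 by (intro mult_left_mono) auto
          moreover have "0 \<le> \<gamma> * int l" using True by simp
          ultimately show ?thesis using m1 by (simp add: mult.commute)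
        next
          case False
          have "\<gamma> * (N - 1) \<le> \<gamma> * int l" using False l1 by (intro mult_left_mono_neg) auto
          moreover have "\<gamma> * int l \<le> 0" using False by (simp add: mult_nonpos_nonneg)
          ultimately show ?thesis using m1 by (simp add: mult.commute)
        qed
      qed
      ultimately show "j \<in> J s" using l unfolding J_def mn_def mx_def by auto
    qed
    have conv: "{lo..hi} \<subseteq> J s"
    proof
      fix j assume j: "j \<in> {lo..hi}"
      have a: "lo \<in> J s" "hi \<in> J s" using CJ lohi by auto
      have "hi < n" using lohi(2) unfolding C_def by auto
      then have jn: "j < n" using j by auto
      have "mn \<le> s - \<beta> * int j \<and> s - \<beta> * int j \<le> mx"
      proof (cases "\<beta> \<ge> 0")
        case True
        have "\<beta> * int lo \<le> \<beta> * int j" "\<beta> * int j \<le> \<beta> * int hi" using j True by (auto simp: mult_left_mono)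
        then show ?thesis using a unfolding J_def by auto
      next
        case False
        have "\<beta> * int j \<le> \<beta> * int lo" "\<beta> * int hi \<le> \<beta> * int j" using j False by (auto simp: mult_left_mono_neg)
        then show ?thesis using a unfolding J_def by auto
      qed
      then show "j \<in> J s" using jn unfolding J_def by auto
    qed
    have cong: "\<forall>c\<in>int ` C s. \<forall>c'\<in>int ` C s. q dvd c - c'"
    proof clarify
      fix j j' assume "j \<in> C s" "j' \<in> C s"
      then obtain l l' where l: "\<beta> * int j + \<gamma> * int l = s" "\<beta> * int j' + \<gamma> * int l' = s"
        unfolding C_def by auto
      have e: "\<gamma> * (int l' - int l) = \<beta> * (int j - int j')" using l by (simp add: algebra_simps)
      have "(\<gamma> div g) * (int l' - int l) = (\<beta> div g) * (int j - int j')"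
      proof -
        have "g * ((\<gamma> div g) * (int l' - int l)) = g * ((\<beta> div g) * (int j - int j'))"
          using e gdb by (metis dvd_mult_div_cancel mult.assoc)
        then show ?thesis using g0 by simp
      qed
      then have "(\<gamma> div g) dvd (\<beta> div g) * (int j - int j')" by (metis dvd_triv_left)
      then have "(\<gamma> div g) dvd (int j - int j')"
        using cop2 by (metis coprime_commute coprime_dvd_mult_right_iff)
      then show "q dvd int j - int j'" unfolding qabs by simp
    qed
    have "real (card (int ` C s)) \<le> real_of_int (int hi - int lo) / real_of_int q + 1"
      by (rule card_cong_interval[OF q0 _ _ cong]) (use bnd lohi in auto)
    moreover have "card (int ` C s) = card (C s)" by (simp add: card_image)
    moreover have "int hi - int lo \<le> int (card (J s))"
    proof -
      have "card {lo..hi} \<le> card (J s)" using conv finJ by (rule card_mono[rotated])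
      then show ?thesis using bnd lohi by simp
    qed
    ultimately show ?thesis using q0
      by (smt (verit, best) divide_right_mono of_int_le_iff of_int_of_nat_eq of_int_pos)
  qed
  have stepD: "real (\<Sum>s\<in>S2. card (J s)) \<le> real n * (real_of_int ((N - 1) * \<bar>\<gamma>\<bar>) / real_of_int (g * int p) + 1)"
  proof -
    have "(\<Sum>s\<in>S2. card (J s)) = card (Sigma S2 J)"
      using finS2 finJ by (simp add: card_SigmaI)
    also have "card (Sigma S2 J) = card (Sigma {..<n} (\<lambda>j. {s\<in>S2. j \<in> J s}))"
    proof (rule bij_betw_same_card[of "\<lambda>(s,j). (j,s)"])
      show "bij_betw (\<lambda>(s, j). (j, s)) (Sigma S2 J) (Sigma {..<n} (\<lambda>j. {s \<in> S2. j \<in> J s}))"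
        unfolding bij_betw_def inj_on_def J_def by auto
    qed
    also have "\<dots> = (\<Sum>j<n. card {s\<in>S2. j \<in> J s})"
      using finS2 by (simp add: card_SigmaI)
    finally have e: "real (\<Sum>s\<in>S2. card (J s)) = (\<Sum>j<n. real (card {s\<in>S2. j \<in> J s}))" by simp
    have gp0: "g * int p > 0" using g0 p0 by simp
    have each: "real (card {s\<in>S2. j \<in> J s}) \<le> real_of_int ((N - 1) * \<bar>\<gamma>\<bar>) / real_of_int (g * int p) + 1" for j
    proof -
      have cg: "\<forall>c\<in>{s\<in>S2. j \<in> J s}. \<forall>c'\<in>{s\<in>S2. j \<in> J s}. g * int p dvd c - c'"
      proof clarify
        fix c c' assume "c \<in> S2" "c' \<in> S2"
        then have "g dvd c - c'" "int p dvd c - c'" using Sc unfolding S2_def by auto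
        then show "g * int p dvd c - c'" using cop unfolding g_def by (simp add: divides_mult)
      qed
      have "real (card {s\<in>S2. j \<in> J s}) \<le> real_of_int ((\<beta> * int j + mx) - (\<beta> * int j + mn)) / real_of_int (g * int p) + 1"
        by (rule card_cong_interval[OF gp0 _ _ cg]) (auto simp: J_def mn_def mx_def)
      then show ?thesis using mxmn by simp
    qed
    have "(\<Sum>j<n. real (card {s\<in>S2. j \<in> J s})) \<le> (\<Sum>j<n. real_of_int ((N - 1) * \<bar>\<gamma>\<bar>) / real_of_int (g * int p) + 1)"
      by (rule sum_mono) (rule each)
    then show ?thesis using e by simp
  qed
  have stepE: "real (card S2) \<le> 4 * real_of_int \<bar>\<gamma>\<bar> * real n / real_of_int (g * int p) + 1"
  proof -
    have gp0: "g * int p > 0" using g0 p0 by simp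
    have cg: "\<forall>c\<in>S2. \<forall>c'\<in>S2. g * int p dvd c - c'"
    proof clarify
      fix c c' assume "c \<in> S2" "c' \<in> S2"
      then have "g dvd c - c'" "int p dvd c - c'" using Sc unfolding S2_def by auto
      then show "g * int p dvd c - c'" using cop unfolding g_def by (simp add: divides_mult)
    qed
    have "real (card S2) \<le> real_of_int (2*\<bar>\<gamma>\<bar>*N - (-2*\<bar>\<gamma>\<bar>*N)) / real_of_int (g * int p) + 1"
      by (rule card_cong_interval[OF gp0 _ _ cg]) (auto simp: S2_def N_def)
    then show ?thesis unfolding N_def by simp
  qed
  have "real (card P) \<le> (\<Sum>s\<in>S2. real (card (C s)))"
    using stepA stepB by (simp flip: of_nat_sum)
  also have "\<dots> \<le> (\<Sum>s\<in>S2. real (card (J s)) / real_of_int q + 1)"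
    by (rule sum_mono) (rule stepC)
  also have "\<dots> = real (\<Sum>s\<in>S2. card (J s)) / real_of_int q + real (card S2)"
    by (simp add: sum.distrib sum_divide_distrib)
  also have "\<dots> \<le> real n * (real_of_int ((N - 1) * \<bar>\<gamma>\<bar>) / real_of_int (g * int p) + 1) / real_of_int q
      + (4 * real_of_int \<bar>\<gamma>\<bar> * real n / real_of_int (g * int p) + 1)"
    using stepD stepE q0 by (intro add_mono divide_right_mono) auto
  also have "\<dots> = real n * real (n - 1) / real p + real n * real_of_int g / real_of_int \<bar>\<gamma>\<bar>
       + 4 * real_of_int \<bar>\<gamma>\<bar> * real n / (real_of_int g * real p) + 1"
  proof -
    have "real_of_int \<bar>\<gamma>\<bar> = real_of_int q * real_of_int g" using qg by simp
    moreover have "real_of_int (N - 1) = real (n - 1)" unfolding N_def using n0 by (simp add: of_nat_diff)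
    ultimately show ?thesis using q0 g0 p0
      by (simp add: field_simps)
  qed
  finally show ?thesis unfolding P_def g_def by simp
qed

lemma count2:
  fixes \<beta> \<gamma> :: int and n p :: nat and S :: "int set"
  assumes bne: "\<beta> \<noteq> 0" and gne: "\<gamma> \<noteq> 0" and pp: "prime p"
    and cop: "coprime (gcd \<beta> \<gamma>) (int p)"
    and Sc: "\<forall>s\<in>S. \<forall>s'\<in>S. int p dvd s - s'"
    and n0: "n > 0"
  shows "real (card {(j,l). j < n \<and> l < n \<and> \<beta> * int j + \<gamma> * int l \<in> S})
     \<le> real n * real (n - 1) / real p + real n * real_of_int (gcd \<beta> \<gamma>) / real_of_int (max \<bar>\<beta>\<bar> \<bar>\<gamma>\<bar>)
       + 4 * real_of_int (max \<bar>\<beta>\<bar> \<bar>\<gamma>\<bar>) * real n / (real_of_int (gcd \<beta> \<gamma>) * real p) + 1"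
proof (cases "\<bar>\<beta>\<bar> \<le> \<bar>\<gamma>\<bar>")
  case True
  then have "max \<bar>\<beta>\<bar> \<bar>\<gamma>\<bar> = \<bar>\<gamma>\<bar>" by simp
  then show ?thesis using count2_aux[OF bne gne pp cop Sc True n0] by simp
next
  case False
  then have m: "max \<bar>\<beta>\<bar> \<bar>\<gamma>\<bar> = \<bar>\<beta>\<bar>" by simp
  have F: "\<bar>\<gamma>\<bar> \<le> \<bar>\<beta>\<bar>" using False by simp
  have cop': "coprime (gcd \<gamma> \<beta>) (int p)" using cop by (simp add: gcd.commute)
  have "card {(j,l). j < n \<and> l < n \<and> \<beta> * int j + \<gamma> * int l \<in> S}
      = card {(j,l). j < n \<and> l < n \<and> \<gamma> * int j + \<beta> * int l \<in> S}"
    by (rule bij_betw_same_card[of "\<lambda>(j,l). (l,j)"]) (auto simp: bij_betw_def inj_on_def image_def add.commute)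
  then show ?thesis using count2_aux[OF gne bne pp cop' Sc F n0] m by (simp add: gcd.commute)
qed

definition gv :: "nat \<Rightarrow> nat \<times> nat \<Rightarrow> nat \<Rightarrow> nat" where
  "gv p st y = (fst st * y + snd st) mod p"

definition seeds :: "nat \<Rightarrow> (nat \<times> nat) set" where
  "seeds p = {..<p} \<times> {..<p}"

definition Bs :: "nat \<Rightarrow> nat \<Rightarrow> nat \<Rightarrow> nat set" where
  "Bs p m b = {w. w < p \<and> w mod m = b}"

lemma finite_seeds[simp]: "finite (seeds p)" unfolding seeds_def by simp
lemma card_seeds: "card (seeds p) = p * p" unfolding seeds_def by simp

lemma gv_less: "p > 0 \<Longrightarrow> gv p st y < p" unfolding gv_def by simp

lemma gv_int: "int (gv p st y) = (int (fst st) * int y + int (snd st)) mod int p"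
  unfolding gv_def by (simp add: zmod_int)

lemma gv_dvd: "int p dvd int (gv p st y) - (int (fst st) * int y + int (snd st))"
  unfolding gv_int by (metis dvd_minus_mod dvd_minus_iff minus_diff_eq)

lemma small_dvd_zero:
  fixes a :: int assumes "int p dvd a" "\<bar>a\<bar> < int p" shows "a = 0"
proof (rule ccontr)
  assume "a \<noteq> 0"
  then have "\<bar>int p\<bar> \<le> \<bar>a\<bar>" using assms(1) by (rule dvd_imp_le_int)
  then show False using assms(2) by simp
qed

lemma gv_inj:
  assumes pp: "prime p" and xy: "x < p" "y < p" "x \<noteq> y"
    and st: "st \<in> seeds p" "st' \<in> seeds p"
    and ex: "gv p st x = gv p st' x" and ey: "gv p st y = gv p st' y"
  shows "st = st'"
proof -
  obtain s t where s: "st = (s,t)" by (cases st)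
  obtain s' t' where s': "st' = (s',t')" by (cases st')
  have b: "s < p" "t < p" "s' < p" "t' < p" using st s s' unfolding seeds_def by auto
  have "(int s * int x + int t) mod int p = (int s' * int x + int t') mod int p"
    using ex gv_int[of p st x] gv_int[of p st' x] s s' by simp
  then have dx: "int p dvd (int s * int x + int t) - (int s' * int x + int t')"
    by (simp add: mod_eq_dvd_iff)
  have "(int s * int y + int t) mod int p = (int s' * int y + int t') mod int p"
    using ey gv_int[of p st y] gv_int[of p st' y] s s' by simp
  then have dy: "int p dvd (int s * int y + int t) - (int s' * int y + int t')"
    by (simp add: mod_eq_dvd_iff)
  have "int p dvd ((int s * int x + int t) - (int s' * int x + int t')) - ((int s * int y + int t) - (int s' * int y + int t'))"
    using dx dy by (rule dvd_diff)
  moreover have "((int s * int x + int t) - (int s' * int x + int t')) - ((int s * int y + int t) - (int s' * int y + int t'))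
      = (int s - int s') * (int x - int y)" by (simp add: algebra_simps)
  ultimately have d: "int p dvd (int s - int s') * (int x - int y)" by simp
  have pi: "prime (int p)" using pp by simp
  have "\<not> int p dvd (int x - int y)"
  proof
    assume "int p dvd (int x - int y)"
    moreover have "\<bar>int x - int y\<bar> < int p" using xy by auto
    ultimately have "int x - int y = 0" by (rule small_dvd_zero)
    then show False using xy by simp
  qed
  then have "int p dvd (int s - int s')" using d pi by (simp add: prime_dvd_mult_iff)
  moreover have "\<bar>int s - int s'\<bar> < int p" using b by auto
  ultimately have "int s - int s' = 0" by (rule small_dvd_zero)
  then have ss: "s = s'" by simp
  then have "int p dvd int t - int t'" using dx by simp
  moreover have "\<bar>int t - int t'\<bar> < int p" using b by auto
  ultimately have "int t - int t' = 0" by (rule small_dvd_zero)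
  then have "t = t'" by simp
  then show ?thesis using s s' ss by simp
qed

lemma pair_count:
  assumes pp: "prime p" and xy: "x < p" "y < p" "x \<noteq> y"
    and AB: "A \<subseteq> {..<p}" "B \<subseteq> {..<p}"
  shows "card {st\<in>seeds p. gv p st x \<in> A \<and> gv p st y \<in> B} = card A * card B"
proof -
  have p0: "p > 0" using pp by (simp add: prime_gt_0_nat)
  define \<phi> where "\<phi> st = (gv p st x, gv p st y)" for st
  have inj: "inj_on \<phi> (seeds p)"
  proof (rule inj_onI)
    fix s t assume st: "s \<in> seeds p" "t \<in> seeds p" "\<phi> s = \<phi> t"
    then have e: "gv p s x = gv p t x" "gv p s y = gv p t y" by (simp_all add: \<phi>_def)
    show "s = t" by (rule gv_inj[OF pp xy st(1,2) e])
  qed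
  have sub: "\<phi> ` seeds p \<subseteq> {..<p} \<times> {..<p}"
  proof (rule subsetI)
    fix w assume "w \<in> \<phi> ` seeds p"
    then obtain st where "w = \<phi> st" by auto
    then show "w \<in> {..<p} \<times> {..<p}" using gv_less[OF p0, of st x] gv_less[OF p0, of st y] by (simp add: \<phi>_def)
  qed
  have ce: "card (\<phi> ` seeds p) = card ({..<p} \<times> {..<p})"
    using card_image[OF inj] by (simp add: card_seeds)
  have im: "\<phi> ` seeds p = {..<p} \<times> {..<p}"
    by (rule card_subset_eq[OF _ sub ce]) simp
  have inj2: "inj_on \<phi> {st\<in>seeds p. gv p st x \<in> A \<and> gv p st y \<in> B}"
    by (rule inj_on_subset[OF inj]) blast
  have "card {st\<in>seeds p. gv p st x \<in> A \<and> gv p st y \<in> B} = card (\<phi> ` {st\<in>seeds p. gv p st x \<in> A \<and> gv p st y \<in> B})"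
    using card_image[OF inj2] by simp
  also have "\<phi> ` {st\<in>seeds p. gv p st x \<in> A \<and> gv p st y \<in> B} = A \<times> B"
  proof
    show "\<phi> ` {st \<in> seeds p. gv p st x \<in> A \<and> gv p st y \<in> B} \<subseteq> A \<times> B" by (auto simp: \<phi>_def)
    show "A \<times> B \<subseteq> \<phi> ` {st \<in> seeds p. gv p st x \<in> A \<and> gv p st y \<in> B}"
    proof
      fix w assume w: "w \<in> A \<times> B"
      then have "w \<in> \<phi> ` seeds p" using im AB by auto
      then obtain st where "st \<in> seeds p" "w = \<phi> st" by auto
      then show "w \<in> \<phi> ` {st \<in> seeds p. gv p st x \<in> A \<and> gv p st y \<in> B}" using w by (auto simp: \<phi>_def)
    qed
  qed
  finally show ?thesis by (simp add: card_cartesian_product)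
qed

lemma triple_rel:
  "int p dvd (int y - int z) * int (gv p st x) + (int z - int x) * int (gv p st y) + (int x - int y) * int (gv p st z)"
proof -
  define L where "L t = int (fst st) * int t + int (snd st)" for t
  obtain kx where kx: "int (gv p st x) - L x = int p * kx" using gv_dvd[of p st x] unfolding L_def by (auto elim: dvdE)
  obtain ky where ky: "int (gv p st y) - L y = int p * ky" using gv_dvd[of p st y] unfolding L_def by (auto elim: dvdE)
  obtain kz where kz: "int (gv p st z) - L z = int p * kz" using gv_dvd[of p st z] unfolding L_def by (auto elim: dvdE)
  have "(int y - int z) * int (gv p st x) + (int z - int x) * int (gv p st y) + (int x - int y) * int (gv p st z)
     = (int y - int z) * (L x + int p * kx) + (int z - int x) * (L y + int p * ky) + (int x - int y) * (L z + int p * kz)"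
    using kx ky kz by (simp add: algebra_simps)
  also have "\<dots> = int p * ((int y - int z) * kx + (int z - int x) * ky + (int x - int y) * kz)"
    unfolding L_def by (simp add: algebra_simps)
  finally show ?thesis by simp
qed

lemma Bs_param:
  assumes m0: "0 < m" and bm: "b < m"
  shows "Bs p m b = (\<lambda>j. b + m * j) ` {..<(p + m - 1 - b) div m}"
proof -
  have key: "b + m * j < p \<longleftrightarrow> j < (p + m - 1 - b) div m" for j
  proof -
    have "j < (p + m - 1 - b) div m \<longleftrightarrow> j + 1 \<le> (p + m - 1 - b) div m" by linarith
    also have "\<dots> \<longleftrightarrow> (j + 1) * m \<le> p + m - 1 - b" using m0 by (rule less_eq_div_iff_mult_less_eq)
    also have "(j + 1) * m = m * j + m" by (simp add: algebra_simps)
    also have "m * j + m \<le> p + m - 1 - b \<longleftrightarrow> b + m * j < p" using bm by linarith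
    finally show ?thesis by simp
  qed
  have modb: "(b + m * j) mod m = b" for j using bm by simp
  show ?thesis
  proof
    show "Bs p m b \<subseteq> (\<lambda>j. b + m * j) ` {..<(p + m - 1 - b) div m}"
    proof
      fix w assume "w \<in> Bs p m b"
      then have w: "w < p" "w mod m = b" unfolding Bs_def by auto
      then have e: "w = b + m * (w div m)" by (metis mod_mult_div_eq add.commute)
      then have "w div m < (p + m - 1 - b) div m" using key w(1) by metis
      then show "w \<in> (\<lambda>j. b + m * j) ` {..<(p + m - 1 - b) div m}" using e by blast
    qed
    show "(\<lambda>j. b + m * j) ` {..<(p + m - 1 - b) div m} \<subseteq> Bs p m b"
    proof
      fix w assume "w \<in> (\<lambda>j. b + m * j) ` {..<(p + m - 1 - b) div m}"
      then obtain j where j: "j < (p + m - 1 - b) div m" "w = b + m * j" by auto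
      then show "w \<in> Bs p m b" using key[of j] modb[of j] unfolding Bs_def by simp
    qed
  qed
qed

lemma card_Bs:
  assumes "0 < m" "b < m"
  shows "card (Bs p m b) = (p + m - 1 - b) div m"
proof -
  have "inj_on (\<lambda>j. b + m * j) {..<(p + m - 1 - b) div m}" using assms(1) by (simp add: inj_on_def)
  then show ?thesis unfolding Bs_param[OF assms] by (simp add: card_image)
qed

lemma card_Bs_bounds:
  assumes "0 < m" "b < m"
  shows "real (card (Bs p m b)) \<le> real p / real m + 1" "real (card (Bs p m b)) \<ge> real p / real m - 1"
proof -
  define c where "c = p + m - 1 - b"
  have c: "real c \<ge> real p" "real c \<le> real p + real m" using assms unfolding c_def by auto
  have "real (c div m) \<le> real c / real m" by (rule of_nat_div_le_of_nat)
  also have "\<dots> \<le> (real p + real m) / real m" using c assms by (intro divide_right_mono) auto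
  also have "\<dots> = real p / real m + 1" using assms by (simp add: field_simps)
  finally show "real (card (Bs p m b)) \<le> real p / real m + 1" unfolding card_Bs[OF assms] c_def .
  have "real c / real m - 1 \<le> real (c div m)"
  proof -
    have "c = c div m * m + c mod m" by simp
    then have "real c = real (c div m) * real m + real (c mod m)" by (metis of_nat_add of_nat_mult)
    moreover have "real (c mod m) \<le> real m" using assms by simp
    ultimately have "real c \<le> real (c div m) * real m + real m" by linarith
    then show ?thesis using assms by (simp add: field_simps)
  qed
  moreover have "real p / real m - 1 \<le> real c / real m - 1" using c assms by (simp add: divide_right_mono)
  ultimately show "real (card (Bs p m b)) \<ge> real p / real m - 1" unfolding card_Bs[OF assms] c_def by linarith
qed

lemma Bs_elem:
  assumes "0 < m" "b < m" "w \<in> Bs p m b"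
  shows "w = b + m * (w div m)" "w div m < card (Bs p m b)"
proof -
  obtain j where j: "j < (p + m - 1 - b) div m" "w = b + m * j"
    using assms(3) unfolding Bs_param[OF assms(1,2)] by auto
  have "w div m = j" using j(2) assms(1,2) by simp
  then show "w = b + m * (w div m)" "w div m < card (Bs p m b)"
    using j card_Bs[OF assms(1,2)] by auto
qed

lemma prime_coprime_small:
  fixes g :: int assumes "prime p" "0 < g" "g < int p"
  shows "coprime g (int p)"
proof -
  have "\<not> int p dvd g" using assms by (auto dest: zdvd_imp_le)
  moreover have "prime (int p)" using assms by simp
  ultimately show ?thesis by (metis coprime_commute prime_imp_coprime)
qed

lemma triple_count:
  fixes x y z p m b :: nat and A :: "nat set"
  assumes pp: "prime p" and xyz: "x < p" "y < p" "z < p" "x \<noteq> y" "x \<noteq> z"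
    and m0: "0 < m" and mp: "m < p" and bm: "b < m" and A: "A \<subseteq> {..<p}"
  defines "nB \<equiv> card (Bs p m b)"
    and "\<beta> \<equiv> int z - int x" and "\<gamma> \<equiv> int x - int y"
  shows "real (card {st\<in>seeds p. gv p st x \<in> A \<and> gv p st y \<in> Bs p m b \<and> gv p st z \<in> Bs p m b})
    \<le> real (card A) * (real nB * real (nB - 1) / real p + real nB * real_of_int (gcd \<beta> \<gamma>) / real_of_int (max \<bar>\<beta>\<bar> \<bar>\<gamma>\<bar>)
       + 4 * real_of_int (max \<bar>\<beta>\<bar> \<bar>\<gamma>\<bar>) * real nB / (real_of_int (gcd \<beta> \<gamma>) * real p) + 1)"
proof -
  define B where "B = Bs p m b"
  define bound where "bound = real nB * real (nB - 1) / real p + real nB * real_of_int (gcd \<beta> \<gamma>) / real_of_int (max \<bar>\<beta>\<bar> \<bar>\<gamma>\<bar>)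
       + 4 * real_of_int (max \<bar>\<beta>\<bar> \<bar>\<gamma>\<bar>) * real nB / (real_of_int (gcd \<beta> \<gamma>) * real p) + 1"
  have finA: "finite A" using A finite_subset by blast
  have bne: "\<beta> \<noteq> 0" "\<gamma> \<noteq> 0" using xyz unfolding \<beta>_def \<gamma>_def by auto
  have g0: "gcd \<beta> \<gamma> > 0" using bne by simp
  have "gcd \<beta> \<gamma> dvd \<bar>\<beta>\<bar>" by simp
  then have "gcd \<beta> \<gamma> \<le> \<bar>\<beta>\<bar>" using bne by (intro zdvd_imp_le) auto
  moreover have "\<bar>\<beta>\<bar> < int p" using xyz unfolding \<beta>_def by auto
  ultimately have cop: "coprime (gcd \<beta> \<gamma>) (int p)" using prime_coprime_small[OF pp g0] by simp
  have bB: "b \<in> B" using bm mp unfolding B_def Bs_def by auto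
  have finB: "finite B" unfolding B_def Bs_def by (rule finite_subset[of _ "{..<p}"]) auto
  have nB0: "nB > 0" unfolding nB_def B_def[symmetric] using finB bB card_gt_0_iff by blast
  have pm: "\<not> int p dvd int m" using m0 mp by (auto dest: zdvd_imp_le)
  have pi: "prime (int p)" using pp by simp
  have each: "real (card {st\<in>seeds p. gv p st x = u \<and> gv p st y \<in> B \<and> gv p st z \<in> B}) \<le> bound" for u
  proof -
    define S where "S = {s. int p dvd (int y - int z) * int u + (\<beta> + \<gamma>) * int b + int m * s}"
    define L where "L = {(j,l). j < nB \<and> l < nB \<and> \<beta> * int j + \<gamma> * int l \<in> S}"
    define \<psi> where "\<psi> st = (gv p st y div m, gv p st z div m)" for st
    have "card {st\<in>seeds p. gv p st x = u \<and> gv p st y \<in> B \<and> gv p st z \<in> B} \<le> card L"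
    proof (rule card_inj_on_le)
      show "inj_on \<psi> {st\<in>seeds p. gv p st x = u \<and> gv p st y \<in> B \<and> gv p st z \<in> B}"
      proof (rule inj_onI)
        fix s t assume s: "s \<in> {st\<in>seeds p. gv p st x = u \<and> gv p st y \<in> B \<and> gv p st z \<in> B}"
          and t: "t \<in> {st\<in>seeds p. gv p st x = u \<and> gv p st y \<in> B \<and> gv p st z \<in> B}" and e: "\<psi> s = \<psi> t"
        have "gv p s y = b + m * (gv p s y div m)" using s Bs_elem[OF m0 bm] unfolding B_def by auto
        also have "\<dots> = b + m * (gv p t y div m)" using e unfolding \<psi>_def by simp
        also have "\<dots> = gv p t y" using t Bs_elem[OF m0 bm] unfolding B_def by auto
        finally have ey: "gv p s y = gv p t y" .
        have ex: "gv p s x = gv p t x" using s t by simp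
        show "s = t" using gv_inj[OF pp xyz(1,2,4) _ _ ex ey] s t by simp
      qed
      show "\<psi> ` {st\<in>seeds p. gv p st x = u \<and> gv p st y \<in> B \<and> gv p st z \<in> B} \<subseteq> L"
      proof
        fix w assume "w \<in> \<psi> ` {st\<in>seeds p. gv p st x = u \<and> gv p st y \<in> B \<and> gv p st z \<in> B}"
        then obtain st where st: "st \<in> seeds p" "gv p st x = u" "gv p st y \<in> B" "gv p st z \<in> B" "w = \<psi> st"
          by auto
        define j where "j = gv p st y div m"
        define l where "l = gv p st z div m"
        have jy: "gv p st y = b + m * j" "j < nB" using Bs_elem[OF m0 bm] st(3) unfolding j_def B_def nB_def by auto
        have lz: "gv p st z = b + m * l" "l < nB" using Bs_elem[OF m0 bm] st(4) unfolding l_def B_def nB_def by auto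
        have "int p dvd (int y - int z) * int (gv p st x) + (int z - int x) * int (gv p st y) + (int x - int y) * int (gv p st z)"
          by (rule triple_rel)
        also have "(int y - int z) * int (gv p st x) + (int z - int x) * int (gv p st y) + (int x - int y) * int (gv p st z)
            = (int y - int z) * int u + (\<beta> + \<gamma>) * int b + int m * (\<beta> * int j + \<gamma> * int l)"
          unfolding jy(1) lz(1) st(2) \<beta>_def \<gamma>_def by (simp add: algebra_simps)
        finally have "\<beta> * int j + \<gamma> * int l \<in> S" unfolding S_def by simp
        then show "w \<in> L" unfolding L_def st(5) \<psi>_def j_def[symmetric] l_def[symmetric] using jy(2) lz(2) by simp
      qed
      show "finite L" unfolding L_def by (rule finite_subset[of _ "{..<nB} \<times> {..<nB}"]) auto
    qed
    moreover have "real (card L) \<le> bound"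
    proof -
      have Sc: "\<forall>s\<in>S. \<forall>s'\<in>S. int p dvd s - s'"
      proof clarify
        fix s s' assume "s \<in> S" "s' \<in> S"
        then have "int p dvd ((int y - int z) * int u + (\<beta> + \<gamma>) * int b + int m * s)
            - ((int y - int z) * int u + (\<beta> + \<gamma>) * int b + int m * s')" unfolding S_def by (intro dvd_diff) auto
        then have "int p dvd int m * (s - s')" by (simp add: algebra_simps)
        then show "int p dvd s - s'" using pi pm by (simp add: prime_dvd_mult_iff)
      qed
      show ?thesis using count2[OF bne pp cop Sc nB0] unfolding L_def bound_def .
    qed
    ultimately show ?thesis by linarith
  qed
  have "{st\<in>seeds p. gv p st x \<in> A \<and> gv p st y \<in> B \<and> gv p st z \<in> B}
      = (\<Union>u\<in>A. {st\<in>seeds p. gv p st x = u \<and> gv p st y \<in> B \<and> gv p st z \<in> B})" by auto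
  then have "card {st\<in>seeds p. gv p st x \<in> A \<and> gv p st y \<in> B \<and> gv p st z \<in> B}
      \<le> (\<Sum>u\<in>A. card {st\<in>seeds p. gv p st x = u \<and> gv p st y \<in> B \<and> gv p st z \<in> B})"
    using card_UN_le[OF finA] by simp
  then have "real (card {st\<in>seeds p. gv p st x \<in> A \<and> gv p st y \<in> B \<and> gv p st z \<in> B})
      \<le> (\<Sum>u\<in>A. real (card {st\<in>seeds p. gv p st x = u \<and> gv p st y \<in> B \<and> gv p st z \<in> B}))"
    by (simp only: of_nat_sum[symmetric] of_nat_le_iff)
  also have "\<dots> \<le> (\<Sum>u\<in>A. bound)" by (rule sum_mono) (rule each)
  also have "\<dots> = real (card A) * bound" by simp
  finally show ?thesis unfolding B_def bound_def .
qed

lemma harm_le_ln: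
  assumes "N \<ge> 1"
  shows "(\<Sum>d\<in>{1..N}. 1 / real d) \<le> 1 + ln (real N)"
  using assms
proof (induction N rule: dec_induct)
  case base then show ?case by simp
next
  case (step n)
  have n1: "real n \<ge> 1" using step.hyps by simp
  have "ln (real n / (real n + 1)) \<le> real n / (real n + 1) - 1"
    using n1 by (intro ln_le_minus_one) auto
  moreover have "ln (real n / (real n + 1)) = ln (real n) - ln (real n + 1)"
    using n1 by (simp add: ln_div)
  moreover have "real n / (real n + 1) - 1 = - (1 / (real n + 1))"
    using n1 by (simp add: field_simps)
  ultimately have "1 / (real n + 1) \<le> ln (real n + 1) - ln (real n)" by linarith
  then show ?case using step.IH by (simp add: add.commute)
qed

lemma sum_inv_max:
  "(\<Sum>i\<in>{1..M}. \<Sum>j\<in>{1..M}. 1 / real (max i j)) \<le> 2 * real M"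
proof (induction M)
  case 0 then show ?case by simp
next
  case (Suc M)
  have spl: "(\<Sum>i\<in>{1..Suc M}. F i) = (\<Sum>i\<in>{1..M}. F i) + F (Suc M)" for F :: "nat \<Rightarrow> real"
    by (simp add: sum.cl_ivl_Suc)
  have row: "(\<Sum>j\<in>{1..M}. 1 / real (max (Suc M) j)) = real M / real (Suc M)"
    by (simp add: max_def)
  have col: "(\<Sum>i\<in>{1..M}. 1 / real (max i (Suc M))) = real M / real (Suc M)"
    by (simp add: max_def)
  have "(\<Sum>i\<in>{1..Suc M}. \<Sum>j\<in>{1..Suc M}. 1 / real (max i j))
      = (\<Sum>i\<in>{1..M}. \<Sum>j\<in>{1..Suc M}. 1 / real (max i j)) + (\<Sum>j\<in>{1..Suc M}. 1 / real (max (Suc M) j))"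
    by (rule spl)
  also have "(\<Sum>i\<in>{1..M}. \<Sum>j\<in>{1..Suc M}. 1 / real (max i j))
      = (\<Sum>i\<in>{1..M}. \<Sum>j\<in>{1..M}. 1 / real (max i j)) + (\<Sum>i\<in>{1..M}. 1 / real (max i (Suc M)))"
    by (simp add: sum.distrib spl)
  also have "(\<Sum>j\<in>{1..Suc M}. 1 / real (max (Suc M) j))
      = (\<Sum>j\<in>{1..M}. 1 / real (max (Suc M) j)) + 1 / real (Suc M)"
    by (simp only: spl max.idem)
  finally have "(\<Sum>i\<in>{1..Suc M}. \<Sum>j\<in>{1..Suc M}. 1 / real (max i j))
      = (\<Sum>i\<in>{1..M}. \<Sum>j\<in>{1..M}. 1 / real (max i j)) + (real M / real (Suc M) + real M / real (Suc M) + 1 / real (Suc M))"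
    using row col by simp
  also have "real M / real (Suc M) + real M / real (Suc M) + 1 / real (Suc M) = (2 * real M + 1) / real (Suc M)"
    by (simp add: add_divide_distrib)
  also have "(2 * real M + 1) / real (Suc M) \<le> 2" by (simp add: divide_le_eq)
  finally show ?case using Suc.IH by simp
qed

lemma sum_dvd_reindex:
  fixes f :: "nat \<Rightarrow> real"
  assumes d: "d > 0"
  shows "(\<Sum>a\<in>{1..N}. if d dvd a then f a else 0) = (\<Sum>i\<in>{1..N div d}. f (d * i))"
proof -
  have "(\<Sum>a\<in>{1..N}. if d dvd a then f a else 0) = (\<Sum>a\<in>{a\<in>{1..N}. d dvd a}. f a)"
    using sum.inter_filter[of "{1..N}" f "\<lambda>a. d dvd a"] by simp
  also have "{a\<in>{1..N}. d dvd a} = (\<lambda>i. d * i) ` {1..N div d}"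
  proof
    show "{a\<in>{1..N}. d dvd a} \<subseteq> (\<lambda>i. d * i) ` {1..N div d}"
    proof
      fix a assume a: "a \<in> {a\<in>{1..N}. d dvd a}"
      then obtain i where i: "a = d * i" by auto
      have "i \<ge> 1" using a i by (cases i) auto
      moreover have "i \<le> N div d" using a i d by (simp add: less_eq_div_iff_mult_less_eq mult.commute)
      ultimately show "a \<in> (\<lambda>i. d * i) ` {1..N div d}" using i by auto
    qed
    show "(\<lambda>i. d * i) ` {1..N div d} \<subseteq> {a\<in>{1..N}. d dvd a}"
    proof
      fix a assume "a \<in> (\<lambda>i. d * i) ` {1..N div d}"
      then obtain i where i0: "i \<in> {1..N div d}" "a = d * i" by (rule imageE)
      then have i: "a = d * i" "1 \<le> i" "i \<le> N div d" by auto
      have "d * i \<le> N" using i d by (simp add: less_eq_div_iff_mult_less_eq mult.commute)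
      moreover have "1 \<le> d * i" using i d by simp
      ultimately show "a \<in> {a\<in>{1..N}. d dvd a}" using i by auto
    qed
  qed
  also have "(\<Sum>a\<in>(\<lambda>i. d * i) ` {1..N div d}. f a) = (\<Sum>i\<in>{1..N div d}. f (d * i))"
    using d by (subst sum.reindex) (auto simp: inj_on_def)
  finally show ?thesis .
qed

lemma gcd_sum:
  assumes N1: "N \<ge> 1"
  shows "(\<Sum>a\<in>{1..N}. \<Sum>b\<in>{1..N}. real (gcd a b) / real (max a b)) \<le> 2 * real N * (1 + ln (real N))"
proof -
  define T where "T d a b = (if d dvd a \<and> d dvd b then real d / real (max a b) else 0)" for d a b
  have step1: "real (gcd a b) / real (max a b) \<le> (\<Sum>d\<in>{1..N}. T d a b)" if ab: "a \<in> {1..N}" "b \<in> {1..N}" for a b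
  proof -
    have ga: "gcd a b \<le> a" using ab by (intro gcd_le1_nat) auto
    have gN: "gcd a b \<le> N" using ga ab(1) by (meson atLeastAtMost_iff order_trans)
    have gp: "0 < gcd a b" using ab by simp
    have g: "gcd a b \<in> {1..N}" using gN gp by (simp add: Suc_le_eq)
    have "T (gcd a b) a b \<le> (\<Sum>d\<in>{1..N}. T d a b)"
      by (rule member_le_sum[OF g]) (auto simp: T_def)
    then show ?thesis by (simp add: T_def)
  qed
  have "(\<Sum>a\<in>{1..N}. \<Sum>b\<in>{1..N}. real (gcd a b) / real (max a b))
      \<le> (\<Sum>a\<in>{1..N}. \<Sum>b\<in>{1..N}. \<Sum>d\<in>{1..N}. T d a b)"
    by (intro sum_mono step1) auto
  also have "\<dots> = (\<Sum>a\<in>{1..N}. \<Sum>d\<in>{1..N}. \<Sum>b\<in>{1..N}. T d a b)"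
    by (rule sum.cong[OF refl]) (rule sum.swap)
  also have "\<dots> = (\<Sum>d\<in>{1..N}. \<Sum>a\<in>{1..N}. \<Sum>b\<in>{1..N}. T d a b)"
    by (rule sum.swap)
  also have "\<dots> = (\<Sum>d\<in>{1..N}. \<Sum>i\<in>{1..N div d}. \<Sum>j\<in>{1..N div d}. 1 / real (max i j))"
  proof (rule sum.cong[OF refl])
    fix d assume d: "d \<in> {1..N}"
    then have d0: "d > 0" by simp
    have "(\<Sum>a\<in>{1..N}. \<Sum>b\<in>{1..N}. T d a b)
        = (\<Sum>a\<in>{1..N}. if d dvd a then (\<Sum>b\<in>{1..N}. if d dvd b then real d / real (max a b) else 0) else 0)"
      by (rule sum.cong[OF refl]) (auto simp: T_def)
    also have "\<dots> = (\<Sum>i\<in>{1..N div d}. (\<Sum>b\<in>{1..N}. if d dvd b then real d / real (max (d * i) b) else 0))"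
      by (rule sum_dvd_reindex[OF d0])
    also have "\<dots> = (\<Sum>i\<in>{1..N div d}. \<Sum>j\<in>{1..N div d}. real d / real (max (d * i) (d * j)))"
      by (rule sum.cong[OF refl]) (rule sum_dvd_reindex[OF d0])
    also have "\<dots> = (\<Sum>i\<in>{1..N div d}. \<Sum>j\<in>{1..N div d}. 1 / real (max i j))"
    proof -
      have "real d / real (max (d * i) (d * j)) = 1 / real (max i j)" for i j
      proof -
        have "max (d * i) (d * j) = d * max i j" by (simp add: max_def)
        then show ?thesis using d0 by simp
      qed
      then show ?thesis by simp
    qed
    finally show "(\<Sum>a\<in>{1..N}. \<Sum>b\<in>{1..N}. T d a b) = (\<Sum>i\<in>{1..N div d}. \<Sum>j\<in>{1..N div d}. 1 / real (max i j))" .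
  qed
  also have "\<dots> \<le> (\<Sum>d\<in>{1..N}. 2 * real (N div d))"
    by (intro sum_mono sum_inv_max)
  also have "\<dots> \<le> (\<Sum>d\<in>{1..N}. 2 * real N * (1 / real d))"
  proof (intro sum_mono)
    fix d assume "d \<in> {1..N}"
    have "real (N div d) \<le> real N / real d" by (rule of_nat_div_le_of_nat)
    then show "2 * real (N div d) \<le> 2 * real N * (1 / real d)" by simp
  qed
  also have "\<dots> = 2 * real N * (\<Sum>d\<in>{1..N}. 1 / real d)" by (simp add: sum_distrib_left)
  also have "\<dots> \<le> 2 * real N * (1 + ln (real N))"
    using harm_le_ln[OF N1] by (intro mult_left_mono) auto
  finally show ?thesis .
qed

lemma sum_dist_le:
  fixes \<psi> :: "nat \<Rightarrow> real" and X :: "nat set"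
  assumes nn: "\<And>a. 0 \<le> \<psi> a" and X: "X \<subseteq> {..<U}" and x: "x \<notin> X" "x < U"
  shows "(\<Sum>y\<in>X. \<psi> (nat \<bar>int y - int x\<bar>)) \<le> 2 * (\<Sum>a\<in>{1..U}. \<psi> a)"
proof -
  define X1 where "X1 = {y\<in>X. x < y}"
  define X2 where "X2 = {y\<in>X. y < x}"
  have finX: "finite X" using X finite_subset by blast
  have XX: "X = X1 \<union> X2"
  proof
    show "X \<subseteq> X1 \<union> X2"
    proof
      fix y assume y: "y \<in> X"
      then have "y \<noteq> x" using x(1) by auto
      then show "y \<in> X1 \<union> X2" using y unfolding X1_def X2_def by auto
    qed
  qed (auto simp: X1_def X2_def)
  have dis: "X1 \<inter> X2 = {}" unfolding X1_def X2_def by auto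
  have "(\<Sum>y\<in>X. \<psi> (nat \<bar>int y - int x\<bar>)) = (\<Sum>y\<in>X1. \<psi> (nat \<bar>int y - int x\<bar>)) + (\<Sum>y\<in>X2. \<psi> (nat \<bar>int y - int x\<bar>))"
    using finX XX dis by (metis finite_Un sum.union_disjoint)
  also have "(\<Sum>y\<in>X1. \<psi> (nat \<bar>int y - int x\<bar>)) = (\<Sum>y\<in>X1. \<psi> (y - x))"
  proof (rule sum.cong[OF refl])
    fix y assume "y \<in> X1" then have "x < y" by (simp add: X1_def)
    then have "nat \<bar>int y - int x\<bar> = y - x" by arith
    then show "\<psi> (nat \<bar>int y - int x\<bar>) = \<psi> (y - x)" by (rule arg_cong)
  qed
  also have "\<dots> = (\<Sum>a\<in>(\<lambda>y. y - x) ` X1. \<psi> a)"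
    by (subst sum.reindex) (auto simp: inj_on_def X1_def)
  also have "\<dots> \<le> (\<Sum>a\<in>{1..U}. \<psi> a)"
  proof (rule sum_mono2[OF finite_atLeastAtMost _ nn])
    show "(\<lambda>y. y - x) ` X1 \<subseteq> {1..U}"
    proof
      fix a assume "a \<in> (\<lambda>y. y - x) ` X1"
      then obtain y where y: "y \<in> X" "x < y" "a = y - x" unfolding X1_def by blast
      have "y < U" using y(1) X by auto
      then show "a \<in> {1..U}" using y by auto
    qed
  qed
  also have "(\<Sum>y\<in>X2. \<psi> (nat \<bar>int y - int x\<bar>)) = (\<Sum>y\<in>X2. \<psi> (x - y))"
  proof (rule sum.cong[OF refl])
    fix y assume "y \<in> X2" then have "y < x" by (simp add: X2_def)
    then have "nat \<bar>int y - int x\<bar> = x - y" by arith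
    then show "\<psi> (nat \<bar>int y - int x\<bar>) = \<psi> (x - y)" by (rule arg_cong)
  qed
  also have "\<dots> = (\<Sum>a\<in>(\<lambda>y. x - y) ` X2. \<psi> a)"
    by (subst sum.reindex) (auto simp: inj_on_def X2_def)
  also have "\<dots> \<le> (\<Sum>a\<in>{1..U}. \<psi> a)"
  proof (rule sum_mono2[OF finite_atLeastAtMost _ nn])
    show "(\<lambda>y. x - y) ` X2 \<subseteq> {1..U}"
    proof
      fix a assume "a \<in> (\<lambda>y. x - y) ` X2"
      then obtain y where y: "y \<in> X" "y < x" "a = x - y" unfolding X2_def by blast
      then show "a \<in> {1..U}" using x(2) by auto
    qed
  qed
  finally show ?thesis by simp
qed


lemma cond_pmf_of_set: assumes "finite S" "S \<inter> E \<noteq> {}"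
  shows "cond_pmf (pmf_of_set S) E = pmf_of_set (S \<inter> E)"
proof (rule pmf_eqI)
  fix x
  have "S \<noteq> {}" using assms by auto
  moreover have "set_pmf (pmf_of_set S) \<inter> E \<noteq> {}" using assms \<open>S \<noteq> {}\<close> by auto
  ultimately show "pmf (cond_pmf (pmf_of_set S) E) x = pmf (pmf_of_set (S \<inter> E)) x"
    using assms by (subst pmf_cond) (auto simp: measure_pmf_of_set indicator_def)
qed

lemma ln_ge_half: assumes "x \<ge> (2::real)" shows "ln x \<ge> 1/2"
proof -
  have "ln (1/x) \<le> 1/x - 1" using assms by (intro ln_le_minus_one) auto
  then have "ln x \<ge> 1 - 1/x" using assms by (simp add: ln_div)
  moreover have "1/x \<le> 1/2" using assms by (simp add: field_simps)
  ultimately show ?thesis by linarith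
qed

lemma main:
  fixes U k p m x a b :: nat and X :: "nat set" and lam :: real
  assumes XU: "X \<subseteq> {..<U}" and ck: "card X = k" and pp: "prime p" and pU: "real p > 4 * real U ^ 2"
    and m0: "0 < m" and mU: "m \<le> U" and xU: "x < U" and xX: "x \<notin> X" and am: "a < m" and bm: "b < m"
  defines "Ma \<equiv> cond_pmf (seed_pmf p) {st. hash_fn p m st x = a}"
    and "F \<equiv> bucket_load p m X b"
    and "EF \<equiv> measure_pmf.expectation (seed_pmf p) (bucket_load p m X b)"
  shows "measure_pmf.expectation Ma F = EF \<and> \<bar>EF - real k / real m\<bar> \<le> 1
     \<and> (lam > 0 \<and> k > 0 \<longrightarrow> measure_pmf.prob Ma {st. \<bar>F st - EF\<bar> \<ge> lam * sqrt EF}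
          \<le> 100 * (real U * ln (real U)) / (lam^2 * real k))"
proof -
  have U1: "U \<ge> 1" using xU by simp
  have "real U \<le> 4 * real U ^ 2" using U1 by (simp add: power2_eq_square)
  then have Up: "U < p" using pU by linarith
  have p0: "p > 0" using Up by simp
  have p2: "p \<ge> 2" using pp by (simp add: prime_ge_2_nat)
  have mp: "m < p" using mU Up by simp
  have xp: "x < p" using xU Up by simp
  have Xp: "y < p" if "y \<in> X" for y using that XU Up by auto
  have finX: "finite X" using XU finite_subset by blast
  have kU: "k \<le> U" using ck card_mono[OF _ XU] by simp
  define A where "A = Bs p m a"
  define B where "B = Bs p m b"
  define nA where "nA = card A"
  define nB where "nB = card B"
  define S where "S = seeds p"
  define Sa where "Sa = {st\<in>S. gv p st x \<in> A}"
  have AB: "A \<subseteq> {..<p}" "B \<subseteq> {..<p}" unfolding A_def B_def Bs_def by auto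
  have finS: "finite S" unfolding S_def by simp
  have finSa: "finite Sa" unfolding Sa_def using finS by simp
  have hash_eq: "hash_fn p m st y = c \<longleftrightarrow> gv p st y \<in> Bs p m c" for st y c
    unfolding hash_fn_def gv_def Bs_def using p0 by auto
  have Fst: "F st = (\<Sum>y\<in>X. of_bool (gv p st y \<in> B))" for st
    unfolding F_def bucket_load_def hash_eq B_def ..
  define y0 where "y0 = (if x = 0 then 1 else 0::nat)"
  have y0: "y0 < p" "y0 \<noteq> x" unfolding y0_def using p2 by auto
  have gvl: "gv p st y < p" for st y using p0 by (rule gv_less)
  have cSa: "card Sa = nA * p"
  proof -
    have "Sa = {st\<in>seeds p. gv p st x \<in> A \<and> gv p st y0 \<in> {..<p}}" unfolding Sa_def S_def using gvl by auto
    then show ?thesis using pair_count[OF pp xp y0(1) y0(2)[symmetric] AB(1), of "{..<p}"] unfolding nA_def by simp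
  qed
  have cB: "card {st\<in>S. gv p st y \<in> B} = p * nB" if "y \<in> X" for y
  proof -
    have xy: "x \<noteq> y" using that xX by auto
    have "{st\<in>S. gv p st y \<in> B} = {st\<in>seeds p. gv p st x \<in> {..<p} \<and> gv p st y \<in> B}" unfolding S_def using gvl by auto
    then show ?thesis using pair_count[OF pp xp Xp[OF that] xy subset_refl AB(2)] unfolding nB_def by simp
  qed
  have cAB: "card {st\<in>Sa. gv p st y \<in> B} = nA * nB" if "y \<in> X" for y
  proof -
    have xy: "x \<noteq> y" using that xX by auto
    have "{st\<in>Sa. gv p st y \<in> B} = {st\<in>seeds p. gv p st x \<in> A \<and> gv p st y \<in> B}" unfolding Sa_def S_def by auto
    then show ?thesis using pair_count[OF pp xp Xp[OF that] xy AB] unfolding nA_def nB_def by simp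
  qed
  have finA: "finite A" using AB(1) finite_subset by blast
  have finB: "finite B" using AB(2) finite_subset by blast
  have aA: "a \<in> A" unfolding A_def Bs_def using am mp by auto
  have bB: "b \<in> B" unfolding B_def Bs_def using bm mp by auto
  have nA0: "nA > 0" unfolding nA_def using finA aA card_gt_0_iff by blast
  have nB0: "nB > 0" unfolding nB_def using finB bB card_gt_0_iff by blast
  have Sa0: "Sa \<noteq> {}" using cSa nA0 p0 by auto
  have Meq: "seed_pmf p = pmf_of_set S" unfolding seed_pmf_def S_def seeds_def ..
  have Maeq: "Ma = pmf_of_set Sa"
  proof -
    have e: "S \<inter> {st. hash_fn p m st x = a} = Sa" unfolding Sa_def A_def hash_eq by auto
    show ?thesis unfolding Ma_def Meq using cond_pmf_of_set[OF finS] e Sa0 by simp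
  qed
  have S0: "S \<noteq> {}" using Sa0 unfolding Sa_def by auto
  have cS: "card S = p * p" unfolding S_def by (simp add: card_seeds)
  have sumF: "(\<Sum>st\<in>T. F st) = (\<Sum>y\<in>X. real (card {st\<in>T. gv p st y \<in> B}))" if "finite T" for T
  proof -
    have "(\<Sum>st\<in>T. F st) = (\<Sum>y\<in>X. \<Sum>st\<in>T. of_bool (gv p st y \<in> B))"
      unfolding Fst by (rule sum.swap)
    also have "\<dots> = (\<Sum>y\<in>X. real (card {st\<in>T. gv p st y \<in> B}))"
    proof (rule sum.cong[OF refl])
      fix y
      have "T \<inter> {st. gv p st y \<in> B} = {st\<in>T. gv p st y \<in> B}" by auto
      then show "(\<Sum>st\<in>T. of_bool (gv p st y \<in> B) :: real) = real (card {st\<in>T. gv p st y \<in> B})"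
        using that by simp
    qed
    finally show ?thesis .
  qed
  have EFv: "EF = real k * real nB / real p"
  proof -
    have "EF = (\<Sum>st\<in>S. F st) / real (card S)"
      unfolding EF_def F_def[symmetric] Meq using S0 finS by (simp add: integral_pmf_of_set)
    also have "(\<Sum>st\<in>S. F st) = (\<Sum>y\<in>X. real (p * nB))"
      using sumF[OF finS] cB by simp
    also have "\<dots> = real k * real p * real nB" using ck by simp
    finally show ?thesis using cS p0 by (simp add: field_simps)
  qed
  have SF: "(\<Sum>st\<in>Sa. F st) = real k * real nA * real nB"
  proof -
    have "(\<Sum>st\<in>Sa. F st) = (\<Sum>y\<in>X. real (nA * nB))"
      using sumF[OF finSa] cAB by simp
    then show ?thesis using ck by simp
  qed
  have EaF: "measure_pmf.expectation Ma F = real k * real nB / real p"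
  proof -
    have "measure_pmf.expectation Ma F = (\<Sum>st\<in>Sa. F st) / real (card Sa)"
      unfolding Maeq using Sa0 finSa by (simp add: integral_pmf_of_set)
    then show ?thesis unfolding SF cSa using nA0 p0 by (simp add: field_simps)
  qed
  have part1: "measure_pmf.expectation Ma F = EF" using EaF EFv by simp
  have nBb: "real nB \<le> real p / real m + 1" "real nB \<ge> real p / real m - 1"
    using card_Bs_bounds[OF m0 bm] unfolding nB_def B_def by auto
  have part2: "\<bar>EF - real k / real m\<bar> \<le> 1"
  proof -
    have "\<bar>real nB / real p - 1 / real m\<bar> \<le> 1 / real p"
    proof -
      have "real nB / real p \<le> (real p / real m + 1) / real p" using nBb p0 by (intro divide_right_mono) auto
      also have "(real p / real m + 1) / real p = 1 / real m + 1 / real p" using p0 m0 by (simp add: field_simps)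
      finally have l1: "real nB / real p \<le> 1 / real m + 1 / real p" .
      have "(real p / real m - 1) / real p \<le> real nB / real p" using nBb p0 by (intro divide_right_mono) auto
      moreover have "(real p / real m - 1) / real p = 1 / real m - 1 / real p" using p0 m0 by (simp add: field_simps)
      ultimately have l2: "1 / real m - 1 / real p \<le> real nB / real p" by simp
      show ?thesis using l1 l2 by (simp add: abs_le_iff)
    qed
    then have "\<bar>EF - real k / real m\<bar> \<le> real k / real p"
    proof -
      have "EF - real k / real m = real k * (real nB / real p - 1 / real m)" unfolding EFv by (simp add: field_simps)
      then have "\<bar>EF - real k / real m\<bar> = real k * \<bar>real nB / real p - 1 / real m\<bar>" by (simp add: abs_mult)
      also have "\<dots> \<le> real k * (1 / real p)" using \<open>\<bar>real nB / real p - 1 / real m\<bar> \<le> 1 / real p\<close>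
        by (intro mult_left_mono) auto
      finally show ?thesis by simp
    qed
    also have "real k / real p \<le> 1" using kU Up p0 by simp
    finally show ?thesis .
  qed
  have part3: "lam > 0 \<and> k > 0 \<longrightarrow> measure_pmf.prob Ma {st. \<bar>F st - EF\<bar> \<ge> lam * sqrt EF}
          \<le> 100 * (real U * ln (real U)) / (lam^2 * real k)"
  proof (intro impI, elim conjE)
    assume lam0: "lam > 0" and k0: "k > 0"
    obtain y1 where y1: "y1 \<in> X" using k0 ck by fastforce
    have "y1 < U" "y1 \<noteq> x" using y1 XU xX by auto
    then have U2: "U \<ge> 2" using xU by linarith
    have lnU: "ln (real U) \<ge> 1/2" using U2 by (intro ln_ge_half) simp
    have EF0: "EF > 0" unfolding EFv using k0 nB0 p0 by simp
    define t where "t = lam * sqrt EF"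
    have t0: "t > 0" unfolding t_def using lam0 EF0 by simp
    have t2: "t^2 = lam^2 * EF" unfolding t_def using EF0 by (simp add: power_mult_distrib)
    define bet where "bet z = int z - int x" for z
    define gam where "gam y = int x - int y" for y
    define Err where "Err y z = real nB * real_of_int (gcd (bet z) (gam y)) / real_of_int (max \<bar>bet z\<bar> \<bar>gam y\<bar>)
       + 4 * real_of_int (max \<bar>bet z\<bar> \<bar>gam y\<bar>) * real nB / (real_of_int (gcd (bet z) (gam y)) * real p) + 1" for y z
    have Err0: "Err y z \<ge> 0" for y z unfolding Err_def by (intro add_nonneg_nonneg divide_nonneg_nonneg mult_nonneg_nonneg) auto
    define c where "c y z = real (card {st\<in>Sa. gv p st y \<in> B \<and> gv p st z \<in> B})" for y z
    have cyy: "c y y = real nA * real nB" if "y \<in> X" for y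
      unfolding c_def using cAB[OF that] by simp
    have cyz: "c y z \<le> real nA * (real nB * real nB / real p + Err y z)" if "y \<in> X" "z \<in> X" "y \<noteq> z" for y z
    proof -
      have xy: "x \<noteq> y" "x \<noteq> z" using that xX by auto
      have e: "{st\<in>Sa. gv p st y \<in> B \<and> gv p st z \<in> B} = {st\<in>seeds p. gv p st x \<in> A \<and> gv p st y \<in> Bs p m b \<and> gv p st z \<in> Bs p m b}"
        unfolding Sa_def S_def B_def by auto
      have "c y z \<le> real (card A) * (real nB * real (nB - 1) / real p + Err y z)"
        unfolding c_def e using triple_count[OF pp xp Xp[OF that(1)] Xp[OF that(2)] xy m0 mp bm AB(1)]
        unfolding Err_def bet_def gam_def nB_def B_def by (simp add: add.assoc)
      also have "real nB * real (nB - 1) / real p \<le> real nB * real nB / real p"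
        using p0 by (intro divide_right_mono mult_left_mono) auto
      finally show ?thesis unfolding nA_def using nA0 by (simp add: mult_left_mono)
    qed
    have sqF: "(\<Sum>st\<in>Sa. (F st)^2) = (\<Sum>y\<in>X. \<Sum>z\<in>X. c y z)"
    proof -
      have "(\<Sum>st\<in>Sa. (F st)^2) = (\<Sum>st\<in>Sa. \<Sum>y\<in>X. \<Sum>z\<in>X. of_bool (gv p st y \<in> B \<and> gv p st z \<in> B))"
        unfolding Fst power2_eq_square sum_product by (simp add: of_bool_conj)
      also have "\<dots> = (\<Sum>y\<in>X. \<Sum>st\<in>Sa. \<Sum>z\<in>X. of_bool (gv p st y \<in> B \<and> gv p st z \<in> B))"
        by (rule sum.swap)
      also have "\<dots> = (\<Sum>y\<in>X. \<Sum>z\<in>X. \<Sum>st\<in>Sa. of_bool (gv p st y \<in> B \<and> gv p st z \<in> B))"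
        by (rule sum.cong[OF refl]) (rule sum.swap)
      also have "\<dots> = (\<Sum>y\<in>X. \<Sum>z\<in>X. c y z)"
      proof (intro sum.cong[OF refl])
        fix y z
        have "Sa \<inter> {st. gv p st y \<in> B \<and> gv p st z \<in> B} = {st\<in>Sa. gv p st y \<in> B \<and> gv p st z \<in> B}" by auto
        then show "(\<Sum>st\<in>Sa. of_bool (gv p st y \<in> B \<and> gv p st z \<in> B)) = c y z"
          unfolding c_def using finSa by simp
      qed
      finally show ?thesis .
    qed
    have rowb: "(\<Sum>z\<in>X. c y z) \<le> real nA * real nB + real nA * (real k * (real nB * real nB / real p) + (\<Sum>z\<in>X. Err y z))"
      if y: "y \<in> X" for y
    proof -
      have "(\<Sum>z\<in>X. c y z) = c y y + (\<Sum>z\<in>X - {y}. c y z)" using finX y by (rule sum.remove)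
      also have "(\<Sum>z\<in>X - {y}. c y z) \<le> (\<Sum>z\<in>X - {y}. real nA * (real nB * real nB / real p + Err y z))"
        using y cyz by (intro sum_mono) auto
      also have "\<dots> \<le> (\<Sum>z\<in>X. real nA * (real nB * real nB / real p + Err y z))"
        using finX Err0 by (intro sum_mono2) auto
      also have "\<dots> = real nA * (real k * (real nB * real nB / real p) + (\<Sum>z\<in>X. Err y z))"
        using ck by (simp add: sum_distrib_left[symmetric] sum.distrib)
      finally show ?thesis using cyy[OF y] by simp
    qed
    have SF2: "(\<Sum>st\<in>Sa. (F st)^2) \<le> real k * real nA * real nB + real nA * (real k * real k * (real nB * real nB / real p) + (\<Sum>y\<in>X. \<Sum>z\<in>X. Err y z))"
    proof -
      have "(\<Sum>st\<in>Sa. (F st)^2) \<le> (\<Sum>y\<in>X. real nA * real nB + real nA * (real k * (real nB * real nB / real p) + (\<Sum>z\<in>X. Err y z)))"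
        unfolding sqF by (intro sum_mono rowb)
      also have "\<dots> = real k * real nA * real nB + real nA * (real k * real k * (real nB * real nB / real p) + (\<Sum>y\<in>X. \<Sum>z\<in>X. Err y z))"
        using ck by (simp add: sum.distrib sum_distrib_left[symmetric] algebra_simps)
      finally show ?thesis .
    qed
    have var: "(\<Sum>st\<in>Sa. (F st - EF)^2) \<le> real nA * (real k * real nB + (\<Sum>y\<in>X. \<Sum>z\<in>X. Err y z))"
    proof -
      have "(\<Sum>st\<in>Sa. (F st - EF)^2) = (\<Sum>st\<in>Sa. (F st)^2) - 2 * EF * (\<Sum>st\<in>Sa. F st) + real (card Sa) * EF^2"
      proof -
        have "(\<Sum>st\<in>Sa. (F st - EF)^2) = (\<Sum>st\<in>Sa. ((F st)^2 - (2 * EF) * F st) + EF^2)"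
          by (rule sum.cong[OF refl]) (simp add: power2_diff algebra_simps)
        also have "\<dots> = (\<Sum>st\<in>Sa. (F st)^2) - (2 * EF) * (\<Sum>st\<in>Sa. F st) + real (card Sa) * EF^2"
          by (simp only: sum.distrib sum_subtractf sum_distrib_left sum_constant)
        finally show ?thesis by simp
      qed
      also have "\<dots> \<le> real k * real nA * real nB + real nA * (real k * real k * (real nB * real nB / real p) + (\<Sum>y\<in>X. \<Sum>z\<in>X. Err y z))
          - 2 * EF * (real k * real nA * real nB) + real nA * real p * EF^2"
        using SF2 unfolding SF cSa by simp
      also have "\<dots> = real nA * (real k * real nB + (\<Sum>y\<in>X. \<Sum>z\<in>X. Err y z))"
        unfolding EFv using p0 by (simp add: field_simps power2_eq_square)
      finally show ?thesis .
    qed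
    define d where "d y = nat \<bar>int y - int x\<bar>" for y
    define \<phi> where "\<phi> a b = real (gcd a b) / real (max a b)" for a b
    have \<phi>0: "\<phi> a b \<ge> 0" for a b unfolding \<phi>_def by simp
    have ErrB: "Err y z \<le> real nB * \<phi> (d z) (d y) + 4 * real U * real nB / real p + 1" if yz: "y \<in> X" "z \<in> X" for y z
    proof -
      have yzU: "y < U" "z < U" "y \<noteq> x" "z \<noteq> x" using yz XU xX by auto
      have g1: "gcd (bet z) (gam y) \<ge> 1" using yzU unfolding bet_def gam_def
        by (metis gcd_pos_int int_one_le_iff_zero_less of_nat_eq_iff right_minus_eq)
      have G: "max \<bar>bet z\<bar> \<bar>gam y\<bar> \<le> int U" using yzU xU unfolding bet_def gam_def by auto
      have dz: "nat \<bar>bet z\<bar> = d z" unfolding d_def bet_def ..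
      have dy: "nat \<bar>gam y\<bar> = d y" unfolding d_def gam_def by (simp add: abs_minus_commute)
      have eg: "real_of_int (gcd (bet z) (gam y)) = real (gcd (d z) (d y))"
        unfolding gcd_int_def dz dy by simp
      have eG: "real_of_int (max \<bar>bet z\<bar> \<bar>gam y\<bar>) = real (max (d z) (d y))"
      proof -
        have e1: "real (d z) = real_of_int \<bar>bet z\<bar>" unfolding dz[symmetric] by simp
        have e2: "real (d y) = real_of_int \<bar>gam y\<bar>" unfolding dy[symmetric] by simp
        show ?thesis by (simp only: of_nat_max of_int_max e1 e2)
      qed
      have t1: "real nB * real_of_int (gcd (bet z) (gam y)) / real_of_int (max \<bar>bet z\<bar> \<bar>gam y\<bar>) = real nB * \<phi> (d z) (d y)"
        unfolding eg eG \<phi>_def by simp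
      have t2: "4 * real_of_int (max \<bar>bet z\<bar> \<bar>gam y\<bar>) * real nB / (real_of_int (gcd (bet z) (gam y)) * real p)
          \<le> 4 * real U * real nB / real p"
      proof -
        have "4 * real_of_int (max \<bar>bet z\<bar> \<bar>gam y\<bar>) * real nB / (real_of_int (gcd (bet z) (gam y)) * real p)
            \<le> 4 * real_of_int (max \<bar>bet z\<bar> \<bar>gam y\<bar>) * real nB / (1 * real p)"
        proof -
          have gR: "real_of_int (gcd (bet z) (gam y)) \<ge> 1" using g1 by simp
          have "0 < real_of_int (gcd (bet z) (gam y)) * real p * (1 * real p)" using gR p0 by (intro mult_pos_pos) auto
          moreover have "1 * real p \<le> real_of_int (gcd (bet z) (gam y)) * real p" using gR p0 by simp
          moreover have "0 \<le> 4 * real_of_int (max \<bar>bet z\<bar> \<bar>gam y\<bar>) * real nB" by simp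
          ultimately show ?thesis by (intro divide_left_mono) auto
        qed
        also have "\<dots> \<le> 4 * real U * real nB / real p"
        proof -
          have GR: "real_of_int (max \<bar>bet z\<bar> \<bar>gam y\<bar>) \<le> real U" using G by (metis of_int_le_iff of_int_of_nat_eq)
          have "4 * real_of_int (max \<bar>bet z\<bar> \<bar>gam y\<bar>) * real nB \<le> 4 * real U * real nB"
            using GR by (intro mult_right_mono) auto
          then show ?thesis using p0 by (simp add: divide_right_mono)
        qed
        finally show ?thesis .
      qed
      show ?thesis unfolding Err_def using t1 t2 by linarith
    qed
    have phisum: "(\<Sum>y\<in>X. \<Sum>z\<in>X. \<phi> (d z) (d y)) \<le> 8 * real U * (1 + ln (real U))"
    proof -
      have "(\<Sum>y\<in>X. \<Sum>z\<in>X. \<phi> (d z) (d y)) \<le> (\<Sum>y\<in>X. 2 * (\<Sum>a\<in>{1..U}. \<phi> a (d y)))"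
        unfolding d_def by (intro sum_mono sum_dist_le[OF \<phi>0 XU xX xU])
      also have "\<dots> = 2 * (\<Sum>a\<in>{1..U}. \<Sum>y\<in>X. \<phi> a (d y))"
        by (simp add: sum_distrib_left[symmetric] sum.swap[of _ X])
      also have "\<dots> \<le> 2 * (\<Sum>a\<in>{1..U}. 2 * (\<Sum>b\<in>{1..U}. \<phi> a b))"
        unfolding d_def by (intro mult_left_mono sum_mono sum_dist_le[OF \<phi>0 XU xX xU]) auto
      also have "\<dots> = 4 * (\<Sum>a\<in>{1..U}. \<Sum>b\<in>{1..U}. real (gcd a b) / real (max a b))"
        unfolding \<phi>_def by (simp add: sum_distrib_left[symmetric])
      also have "\<dots> \<le> 4 * (2 * real U * (1 + ln (real U)))"
        using gcd_sum[OF U1] by simp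
      finally show ?thesis by simp
    qed
    define V where "V = (\<Sum>y\<in>X. \<Sum>z\<in>X. Err y z)"
    have V: "V \<le> real nB * (8 * real U * (1 + ln (real U))) + real k * real k * (4 * real U * real nB / real p + 1)"
    proof -
      have "V \<le> (\<Sum>y\<in>X. \<Sum>z\<in>X. real nB * \<phi> (d z) (d y) + (4 * real U * real nB / real p + 1))"
        unfolding V_def using ErrB by (intro sum_mono) (simp add: add.assoc)
      also have "\<dots> = real nB * (\<Sum>y\<in>X. \<Sum>z\<in>X. \<phi> (d z) (d y)) + real k * real k * (4 * real U * real nB / real p + 1)"
        using ck by (simp add: sum.distrib sum_distrib_left)
      also have "\<dots> \<le> real nB * (8 * real U * (1 + ln (real U))) + real k * real k * (4 * real U * real nB / real p + 1)"
        using phisum by (intro add_right_mono mult_left_mono) auto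
      finally show ?thesis .
    qed
    have nBU: "real nB \<ge> real U"
    proof -
      have "real p / real m \<ge> real p / real U" using m0 mU p0 by (intro divide_left_mono) auto
      moreover have "real p / real U > 4 * real U" using pU U1 by (simp add: field_simps power2_eq_square)
      ultimately show ?thesis using nBb(2) U1 by linarith
    qed
    have Q: "real k * real nB + V \<le> 100 * real U * ln (real U) * real nB"
    proof -
      have kk: "real k * real k \<le> real U * real U" using kU by (simp add: mult_mono)
      have a1: "real k * real nB \<le> real U * real nB" using kU by (simp add: mult_right_mono)
      have a2: "real U * real U * (4 * real U * real nB / real p) \<le> real U * real nB"
      proof -
        have "real U * real U * (4 * real U * real nB / real p) = real U * real nB * (4 * real U ^ 2 / real p)"
          by (simp add: power2_eq_square field_simps)
        also have "4 * real U ^ 2 / real p \<le> 1" using pU p0 by simp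
        then have "real U * real nB * (4 * real U ^ 2 / real p) \<le> real U * real nB * 1"
          by (intro mult_left_mono) auto
        finally show ?thesis by simp
      qed
      have a3: "real k * real k * (4 * real U * real nB / real p + 1) \<le> real U * real U * (4 * real U * real nB / real p + 1)"
        using kk p0 by (intro mult_right_mono) auto
      have a4: "real U * real U \<le> real U * real nB" using nBU by (intro mult_left_mono) auto
      have a5: "11 * (real U * real nB) \<le> 92 * ln (real U) * (real U * real nB)"
        using lnU by (intro mult_right_mono) auto
      have "real k * real nB + V \<le> real U * real nB + real nB * (8 * real U * (1 + ln (real U))) + (real U * real nB + real U * real nB)"
        using V a1 a2 a3 a4 by (simp add: algebra_simps)
      also have "\<dots> = 11 * (real U * real nB) + 8 * ln (real U) * (real U * real nB)" by (simp add: algebra_simps)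
      also have "\<dots> \<le> 100 * real U * ln (real U) * real nB" using a5 by (simp add: algebra_simps)
      finally show ?thesis .
    qed
    define E where "E = {st. \<bar>F st - EF\<bar> \<ge> lam * sqrt EF}"
    have prob: "measure_pmf.prob Ma E = real (card (Sa \<inter> E)) / real (card Sa)"
      unfolding Maeq using Sa0 finSa by (simp add: measure_pmf_of_set)
    have cheb: "real (card (Sa \<inter> E)) * t^2 \<le> (\<Sum>st\<in>Sa. (F st - EF)^2)"
    proof -
      have "real (card (Sa \<inter> E)) * t^2 = (\<Sum>st\<in>Sa \<inter> E. t^2)" by simp
      also have "\<dots> \<le> (\<Sum>st\<in>Sa \<inter> E. (F st - EF)^2)"
      proof (rule sum_mono)
        fix st assume "st \<in> Sa \<inter> E"
        then have "t \<le> \<bar>F st - EF\<bar>" unfolding E_def t_def by auto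
        then have "t^2 \<le> \<bar>F st - EF\<bar>^2" using t0 by (intro power_mono) auto
        then show "t^2 \<le> (F st - EF)^2" by simp
      qed
      also have "\<dots> \<le> (\<Sum>st\<in>Sa. (F st - EF)^2)" using finSa by (intro sum_mono2) auto
      finally show ?thesis .
    qed
    have "measure_pmf.prob Ma E \<le> (\<Sum>st\<in>Sa. (F st - EF)^2) / (t^2 * real (card Sa))"
    proof -
      have "real (card (Sa \<inter> E)) \<le> (\<Sum>st\<in>Sa. (F st - EF)^2) / t^2" using cheb t0 by (simp add: field_simps)
      then show ?thesis unfolding prob using Sa0 finSa
        by (simp add: divide_right_mono field_simps card_gt_0_iff)
    qed
    also have "\<dots> \<le> real nA * (real k * real nB + V) / (t^2 * real (card Sa))"
      using var t0 Sa0 finSa unfolding V_def by (intro divide_right_mono) auto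
    also have "t^2 * real (card Sa) = lam^2 * real k * real nB * real nA"
      unfolding t2 cSa EFv using p0 by (simp add: field_simps)
    also have "real nA * (real k * real nB + V) / (lam^2 * real k * real nB * real nA) = (real k * real nB + V) / (lam^2 * real k * real nB)"
      using nA0 by simp
    also have "\<dots> \<le> 100 * real U * ln (real U) * real nB / (lam^2 * real k * real nB)"
      using Q lam0 k0 nB0 by (intro divide_right_mono) auto
    also have "\<dots> = 100 * (real U * ln (real U)) / (lam^2 * real k)" using nB0 by simp
    finally show "measure_pmf.prob Ma {st. \<bar>F st - EF\<bar> \<ge> lam * sqrt EF} \<le> 100 * (real U * ln (real U)) / (lam^2 * real k)"
      unfolding E_def .
  qed
  show ?thesis using part1 part2 part3 by blast
qed

theorem corollary4p2:
  shows "\<exists>C1 C2 :: real. \<forall>(U::nat) (k::nat) (X::nat set) (p::nat) (m::nat) (x::nat) (a::nat) (b::nat).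
    X \<subseteq> {..<U} \<and> card X = k \<and> prime p \<and> real p > 4 * real U ^ 2 \<and>
    0 < m \<and> m \<le> U \<and> x < U \<and> x \<notin> X \<and> a < m \<and> b < m \<longrightarrow>
    (let M = seed_pmf p;
         Ma = cond_pmf M {st. hash_fn p m st x = a};
         F = bucket_load p m X b;
         EF = measure_pmf.expectation M F
     in measure_pmf.expectation Ma F = EF
        \<and> \<bar>EF - real k / real m\<bar> \<le> C1
        \<and> (\<forall>lam::real. lam > 0 \<and> k > 0 \<longrightarrow>
             measure_pmf.prob Ma {st. \<bar>F st - EF\<bar> \<ge> lam * sqrt EF}
               \<le> C2 * (real U * ln (real U)) / (lam^2 * real k)))"
proof (intro exI allI impI)
  fix U k p m x a b :: nat and X :: "nat set"
  assume h: "X \<subseteq> {..<U} \<and> card X = k \<and> prime p \<and> real p > 4 * real U ^ 2 \<and>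
    0 < m \<and> m \<le> U \<and> x < U \<and> x \<notin> X \<and> a < m \<and> b < m"
  have hs: "X \<subseteq> {..<U}" "card X = k" "prime p" "real p > 4 * real U ^ 2" "0 < m" "m \<le> U" "x < U" "x \<notin> X" "a < m" "b < m"
    using h by auto
  show "let M = seed_pmf p;
         Ma = cond_pmf M {st. hash_fn p m st x = a};
         F = bucket_load p m X b;
         EF = measure_pmf.expectation M F
     in measure_pmf.expectation Ma F = EF
        \<and> \<bar>EF - real k / real m\<bar> \<le> 1
        \<and> (\<forall>lam::real. lam > 0 \<and> k > 0 \<longrightarrow>
             measure_pmf.prob Ma {st. \<bar>F st - EF\<bar> \<ge> lam * sqrt EF}
               \<le> 100 * (real U * ln (real U)) / (lam^2 * real k))"
    unfolding Let_def using main[OF hs] by blast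
qed

end
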